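(* Let $L,R$ be nonempty subsets of a group $G$ such that $\mathcal{W}(L)$ and $\mathcal{W}(R)$ are subgroups of $G$, let $s\in G$, and let $k_s$ be the minimum strong connection length in $\langle L\rangle s\langle R\rangle$. If $k_s$ is finite, the double coset $\langle L\rangle s\langle R\rangle$ is the union of exactly $k_s$ strongly connected components of $2\mathrm{S}(G;L,R)$, all of the same cardinality; if $k_s$ is infinite it is the union of infinitely many strongly connected components. Moreover, if $k_s$ is finite and $L\cap N_G(L)\neq\emptyset$ or $R\cap N_G(R)\neq\emptyset$, then all strongly connected components contained in $\langle L\rangle s\langle R\rangle$ are isomorphic as digraphs.
   Context: For nonempty subsets $L,R$ of a group $G$, the two-sided group digraph $2\mathrm{S}(G;L,R)$ has vertex set $G$ and a directed arc $(g,h)$ if and only if $h=l^{-1}gr$ for some $l\in L$, $r\in R$. For nonempty $S$, $\mathcal{W}(S)$ is the set of elements expressible as finite products $s_1\cdots s_n$, $n\ge1$, $s_i\in S$. $g$ is strongly connected to $h$ if there are directed paths from $g$ to $h$ and from $h$ to $g$. Assuming $\mathcal{W}(L),\mathcal{W}(R)$ are subgroups, the minimum strong connection length $k_s$ in $\langle L\rangle s\langle R\rangle$ is the minimum positive length of a word $w$ whose letters all lie in $L$ or all lie in $L^{-1}$ such that $ws$ is strongly connected to $s$ (equivalently, the minimum positive length of a word $w$ with letters all in $R$ or all in $R^{-1}$ such that $sw$ is strongly connected to $s$); it is infinite if no such word exists. $N_G(L)=\{g\in G:g^{-1}Lg=L\}$. *)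

theory Defs
  imports "HOL-Algebra.Algebra" "HOL-Library.Equipollence" "HOL-Library.Extended_Nat"
begin

definition wprod :: "('a, 'b) monoid_scheme \<Rightarrow> 'a list \<Rightarrow> 'a" where
  "wprod G xs = foldr (\<lambda>x y. x \<otimes>\<^bsub>G\<^esub> y) xs \<one>\<^bsub>G\<^esub>"

definition W :: "('a, 'b) monoid_scheme \<Rightarrow> 'a set \<Rightarrow> 'a set" where
  "W G S = {wprod G xs | xs. xs \<noteq> [] \<and> set xs \<subseteq> S}"

definition arc2S :: "('a, 'b) monoid_scheme \<Rightarrow> 'a set \<Rightarrow> 'a set \<Rightarrow> 'a \<Rightarrow> 'a \<Rightarrow> bool" where
  "arc2S G L R g h \<longleftrightarrow> g \<in> carrier G \<and> h \<in> carrier G \<and>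
     (\<exists>l\<in>L. \<exists>r\<in>R. h = inv\<^bsub>G\<^esub> l \<otimes>\<^bsub>G\<^esub> g \<otimes>\<^bsub>G\<^esub> r)"

definition path2S :: "('a, 'b) monoid_scheme \<Rightarrow> 'a set \<Rightarrow> 'a set \<Rightarrow> 'a \<Rightarrow> 'a \<Rightarrow> bool" where
  "path2S G L R = (arc2S G L R)\<^sup>*\<^sup>*"

definition strongly_conn :: "('a, 'b) monoid_scheme \<Rightarrow> 'a set \<Rightarrow> 'a set \<Rightarrow> 'a \<Rightarrow> 'a \<Rightarrow> bool" where
  "strongly_conn G L R g h \<longleftrightarrow> path2S G L R g h \<and> path2S G L R h g"

definition SCCs :: "('a, 'b) monoid_scheme \<Rightarrow> 'a set \<Rightarrow> 'a set \<Rightarrow> 'a set set" where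
  "SCCs G L R = {{h \<in> carrier G. strongly_conn G L R g h} | g. g \<in> carrier G}"

definition double_coset :: "('a, 'b) monoid_scheme \<Rightarrow> 'a set \<Rightarrow> 'a \<Rightarrow> 'a set \<Rightarrow> 'a set" where
  "double_coset G L s R =
     {a \<otimes>\<^bsub>G\<^esub> s \<otimes>\<^bsub>G\<^esub> b | a b. a \<in> generate G L \<and> b \<in> generate G R}"

(* minimum strong connection length k_s (infinity if no such word) *)
definition min_sc_length :: "('a, 'b) monoid_scheme \<Rightarrow> 'a set \<Rightarrow> 'a set \<Rightarrow> 'a \<Rightarrow> enat" where
  "min_sc_length G L R s = Inf {enat (length xs) | xs. xs \<noteq> [] \<and>
      (set xs \<subseteq> L \<or> set xs \<subseteq> (\<lambda>l. inv\<^bsub>G\<^esub> l) ` L) \<and>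
      strongly_conn G L R (wprod G xs \<otimes>\<^bsub>G\<^esub> s) s}"

definition normaliser :: "('a, 'b) monoid_scheme \<Rightarrow> 'a set \<Rightarrow> 'a set" where
  "normaliser G L = {g \<in> carrier G. (\<lambda>l. inv\<^bsub>G\<^esub> g \<otimes>\<^bsub>G\<^esub> l \<otimes>\<^bsub>G\<^esub> g) ` L = L}"

definition sub_digraph_iso :: "('a, 'b) monoid_scheme \<Rightarrow> 'a set \<Rightarrow> 'a set \<Rightarrow> 'a set \<Rightarrow> 'a set \<Rightarrow> bool" where
  "sub_digraph_iso G L R C1 C2 \<longleftrightarrow> (\<exists>f. bij_betw f C1 C2 \<and>
     (\<forall>g\<in>C1. \<forall>h\<in>C1. arc2S G L R g h \<longleftrightarrow> arc2S G L R (f g) (f h)))"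

end

theory Submission imports Defs begin

definition Lp :: "('a, 'b) monoid_scheme \<Rightarrow> 'a set \<Rightarrow> nat \<Rightarrow> 'a set" where
  "Lp G S n = {wprod G xs | xs. length xs = n \<and> set xs \<subseteq> S}"

context monoid
begin

lemma wprod_Nil[simp]: "wprod G [] = \<one>" by (simp add: wprod_def)
lemma wprod_Cons[simp]: "wprod G (x # xs) = x \<otimes> wprod G xs" by (simp add: wprod_def)

lemma wprod_closed: "set xs \<subseteq> carrier G \<Longrightarrow> wprod G xs \<in> carrier G"
  by (induction xs) auto

lemma wprod_append: "set xs \<subseteq> carrier G \<Longrightarrow> set ys \<subseteq> carrier G \<Longrightarrow>
   wprod G (xs @ ys) = wprod G xs \<otimes> wprod G ys"
  by (induction xs) (auto simp: m_assoc wprod_closed)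

lemma Lp_carrier: "S \<subseteq> carrier G \<Longrightarrow> x \<in> Lp G S n \<Longrightarrow> x \<in> carrier G"
  unfolding Lp_def by (auto intro: wprod_closed)

lemma Lp_0: "Lp G S 0 = {\<one>}" unfolding Lp_def by auto

lemma Lp_mult: "S \<subseteq> carrier G \<Longrightarrow> x \<in> Lp G S a \<Longrightarrow> y \<in> Lp G S b \<Longrightarrow> x \<otimes> y \<in> Lp G S (a+b)"
  unfolding Lp_def
proof clarify
  fix xs ys assume "S \<subseteq> carrier G" "set xs \<subseteq> S" "set ys \<subseteq> S" 
  then show "\<exists>zs. wprod G xs \<otimes> wprod G ys = wprod G zs \<and> length zs = length xs + length ys \<and> set zs \<subseteq> S"
    by (intro exI[of _ "xs @ ys"]) (auto simp: wprod_append)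
qed

lemma Lp_pad: "S \<subseteq> carrier G \<Longrightarrow> \<one> \<in> Lp G S \<alpha> \<Longrightarrow> x \<in> Lp G S a \<Longrightarrow> x \<in> Lp G S (a + t*\<alpha>)"
proof (induction t)
  case 0 then show ?case by simp
next
  case (Suc t)
  then have "x \<otimes> \<one> \<in> Lp G S (a + t*\<alpha> + \<alpha>)" by (intro Lp_mult) auto
  moreover have "x \<in> carrier G" using Suc Lp_carrier by blast
  ultimately show ?case by (simp add: algebra_simps)
qed

lemma Lp_rep: "l \<in> S \<Longrightarrow> wprod G (replicate n l) \<in> Lp G S n"
  unfolding Lp_def by (intro CollectI exI[of _ "replicate n l"]) auto

lemma Lp_1: "S \<subseteq> carrier G \<Longrightarrow> l \<in> S \<Longrightarrow> l \<in> Lp G S 1"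
  using Lp_rep[of l S 1] by auto

lemma W_iff: "x \<in> W G S \<longleftrightarrow> (\<exists>n\<ge>1. x \<in> Lp G S n)"
  unfolding W_def Lp_def by (auto simp: Suc_le_eq)

end


context group
begin

lemma Lp_in_W: "subgroup (W G S) G \<Longrightarrow> x \<in> Lp G S n \<Longrightarrow> x \<in> W G S"
proof (cases n)
  case 0
  assume a: "subgroup (W G S) G" "x \<in> Lp G S n"
  then have "x = \<one>" using 0 Lp_0 by auto
  then show ?thesis using a(1) subgroup.one_closed by blast
next
  case (Suc m)
  assume "x \<in> Lp G S n"
  then show ?thesis unfolding W_iff using Suc by (intro exI[of _ n]) auto
qed

lemma inv_len: "S \<subseteq> carrier G \<Longrightarrow> subgroup (W G S) G \<Longrightarrow> x \<in> Lp G S n \<Longrightarrow>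
   \<exists>m. m \<ge> 1 \<and> inv x \<in> Lp G S m \<and> \<one> \<in> Lp G S (n+m)"
proof -
  assume a: "S \<subseteq> carrier G" "subgroup (W G S) G" "x \<in> Lp G S n"
  have "x \<in> W G S" using Lp_in_W[OF a(2) a(3)] .
  then have "inv x \<in> W G S" by (rule subgroup.m_inv_closed[OF a(2)])
  then obtain m where m: "m \<ge> 1" "inv x \<in> Lp G S m" unfolding W_iff by auto
  have "x \<otimes> inv x \<in> Lp G S (n+m)" using a m by (intro Lp_mult) auto
  moreover have "x \<in> carrier G" using a Lp_carrier by blast
  ultimately have "\<one> \<in> Lp G S (n+m)" by simp
  then show ?thesis using m by blast
qed

lemma cancel_l1[simp]: "x \<in> carrier G \<Longrightarrow> g \<in> carrier G \<Longrightarrow> x \<otimes> (inv x \<otimes> g) = g"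
  by (simp add: m_assoc[symmetric])
lemma cancel_l2[simp]: "x \<in> carrier G \<Longrightarrow> g \<in> carrier G \<Longrightarrow> inv x \<otimes> (x \<otimes> g) = g"
  by (simp add: m_assoc[symmetric])

lemma generate_eq_W: "S \<subseteq> carrier G \<Longrightarrow> subgroup (W G S) G \<Longrightarrow> generate G S = W G S"
proof
  assume a: "S \<subseteq> carrier G" "subgroup (W G S) G"
  have "S \<subseteq> W G S"
  proof
    fix l assume "l \<in> S" then have "l \<in> Lp G S 1" using a Lp_1 by blast
    then show "l \<in> W G S" unfolding W_iff by (intro exI[of _ 1]) auto
  qed
  then show "generate G S \<subseteq> W G S" using a generate_subgroup_incl by blast
  have "set xs \<subseteq> S \<Longrightarrow> wprod G xs \<in> generate G S" for xs
    by (induction xs) (auto intro: generate.one generate.incl generate.eng)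
  then show "W G S \<subseteq> generate G S" unfolding W_def by auto
qed

end

locale twoS = group G for G (structure) +
  fixes L R :: "'a set"
  assumes LC: "L \<subseteq> carrier G" and Lne: "L \<noteq> {}" and RC: "R \<subseteq> carrier G" and Rne: "R \<noteq> {}"
    and WL: "subgroup (W G L) G" and WR: "subgroup (W G R) G"
begin

definition Hrel where "Hrel x y \<longleftrightarrow> (\<exists>N. x \<in> Lp G L N \<and> y \<in> Lp G R N)"
definition reach where "reach g h \<longleftrightarrow> g \<in> carrier G \<and> (\<exists>x y. Hrel x y \<and> h = inv x \<otimes> g \<otimes> y)"

lemma LpL_carrier: "x \<in> Lp G L n \<Longrightarrow> x \<in> carrier G" using Lp_carrier LC by blast
lemma LpR_carrier: "x \<in> Lp G R n \<Longrightarrow> x \<in> carrier G" using Lp_carrier RC by blast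

lemma Hrel_carrier: "Hrel x y \<Longrightarrow> x \<in> carrier G \<and> y \<in> carrier G"
  unfolding Hrel_def using LpL_carrier LpR_carrier by blast

lemma one_L: "\<exists>\<alpha>. \<alpha> \<ge> 1 \<and> \<one> \<in> Lp G L \<alpha>"
proof -
  obtain l where l: "l \<in> L" using Lne by blast
  then have "l \<in> Lp G L 1" using Lp_1 LC by blast
  then obtain m where "m \<ge> 1" "\<one> \<in> Lp G L (1+m)" using inv_len[OF LC WL] by blast
  then show ?thesis by (intro exI[of _ "1+m"]) auto
qed

lemma one_R: "\<exists>\<alpha>. \<alpha> \<ge> 1 \<and> \<one> \<in> Lp G R \<alpha>"
proof -
  obtain l where l: "l \<in> R" using Rne by blast
  then have "l \<in> Lp G R 1" using Lp_1 RC by blast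
  then obtain m where "m \<ge> 1" "\<one> \<in> Lp G R (1+m)" using inv_len[OF RC WR] by blast
  then show ?thesis by (intro exI[of _ "1+m"]) auto
qed

lemma Hrel_pad: "x \<in> Lp G L a \<Longrightarrow> y \<in> Lp G R b \<Longrightarrow> \<one> \<in> Lp G L \<alpha> \<Longrightarrow> \<one> \<in> Lp G R \<beta>
   \<Longrightarrow> a + t*\<alpha> = b + u*\<beta> \<Longrightarrow> Hrel x y"
  unfolding Hrel_def using Lp_pad[OF LC, of \<alpha> x a t] Lp_pad[OF RC, of \<beta> y b u] by metis

lemma Hrel_one: "Hrel \<one> \<one>"
  unfolding Hrel_def by (intro exI[of _ 0]) (simp add: Lp_0)

lemma Hrel_mult: "Hrel x y \<Longrightarrow> Hrel x' y' \<Longrightarrow> Hrel (x \<otimes> x') (y \<otimes> y')"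
  unfolding Hrel_def using Lp_mult[OF LC] Lp_mult[OF RC] by blast

lemma Hrel_inv: "Hrel x y \<Longrightarrow> Hrel (inv x) (inv y)"
proof -
  assume "Hrel x y"
  then obtain N where N: "x \<in> Lp G L N" "y \<in> Lp G R N" unfolding Hrel_def by blast
  obtain m1 where m1: "m1 \<ge> 1" "inv x \<in> Lp G L m1" "\<one> \<in> Lp G L (N+m1)"
    using inv_len[OF LC WL N(1)] by blast
  obtain m2 where m2: "m2 \<ge> 1" "inv y \<in> Lp G R m2" "\<one> \<in> Lp G R (N+m2)"
    using inv_len[OF RC WR N(2)] by blast
  obtain a where a: "m1 = Suc a" using m1 by (cases m1) auto
  obtain b where b: "m2 = Suc b" using m2 by (cases m2) auto
  show ?thesis
    by (rule Hrel_pad[OF m1(2) m2(2) m1(3) m2(3), of "N+b" "N+a"]) (simp add: a b algebra_simps)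
qed

lemma Hrel_conj: "c \<in> W G L \<Longrightarrow> Hrel x y \<Longrightarrow> Hrel (c \<otimes> x \<otimes> inv c) y"
proof -
  assume c: "c \<in> W G L" and "Hrel x y"
  then obtain N where N: "x \<in> Lp G L N" "y \<in> Lp G R N" unfolding Hrel_def by blast
  obtain a where a: "c \<in> Lp G L a" using c unfolding W_iff by blast
  obtain m where m: "inv c \<in> Lp G L m" "\<one> \<in> Lp G L (a+m)"
    using inv_len[OF LC WL a] by blast
  obtain \<beta> where \<beta>: "\<beta> \<ge> 1" "\<one> \<in> Lp G R \<beta>" using one_R by blast
  obtain b where b: "\<beta> = Suc b" using \<beta> by (cases \<beta>) auto
  have "c \<otimes> x \<otimes> inv c \<in> Lp G L (a + N + m)"
    using a N m by (intro Lp_mult[OF LC]) auto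
  moreover have "(a+N+m) + b*(a+m) = N + (a+m)*\<beta>" by (simp add: b algebra_simps)
  ultimately show ?thesis by (rule Hrel_pad[OF _ N(2) m(2) \<beta>(2)])
qed


lemma reach_refl: "g \<in> carrier G \<Longrightarrow> reach g g"
  unfolding reach_def using Hrel_one by (intro conjI exI[of _ \<one>]) auto

lemma reach_carrier: "reach g h \<Longrightarrow> h \<in> carrier G"
  unfolding reach_def using Hrel_carrier by auto

lemma reach_sym: "reach g h \<Longrightarrow> reach h g"
proof -
  assume "reach g h"
  then obtain x y where g: "g \<in> carrier G" and H: "Hrel x y" and h: "h = inv x \<otimes> g \<otimes> y"
    unfolding reach_def by blast
  have xy: "x \<in> carrier G" "y \<in> carrier G" using Hrel_carrier[OF H] by auto
  have "g = inv (inv x) \<otimes> h \<otimes> inv y"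
    using xy g by (simp add: h m_assoc)
  moreover have "h \<in> carrier G" using h xy g by simp
  ultimately show ?thesis unfolding reach_def using Hrel_inv[OF H] by blast
qed

lemma reach_trans: "reach g h \<Longrightarrow> reach h k \<Longrightarrow> reach g k"
proof -
  assume "reach g h" "reach h k"
  then obtain x y x' y' where g: "g \<in> carrier G" and H: "Hrel x y" and h: "h = inv x \<otimes> g \<otimes> y"
    and H': "Hrel x' y'" and k: "k = inv x' \<otimes> h \<otimes> y'"
    unfolding reach_def by blast
  have xy: "x \<in> carrier G" "y \<in> carrier G" "x' \<in> carrier G" "y' \<in> carrier G"
    using Hrel_carrier[OF H] Hrel_carrier[OF H'] by auto
  have "k = inv (x \<otimes> x') \<otimes> g \<otimes> (y \<otimes> y')"
    using xy g by (simp add: h k m_assoc inv_mult_group)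
  then show ?thesis unfolding reach_def using g Hrel_mult[OF H H'] by blast
qed

lemma arc_reach: "arc2S G L R g h \<Longrightarrow> reach g h"
proof -
  assume "arc2S G L R g h"
  then obtain l r where g: "g \<in> carrier G" and l: "l \<in> L" and r: "r \<in> R" and h: "h = inv l \<otimes> g \<otimes> r"
    unfolding arc2S_def by blast
  have "Hrel l r" unfolding Hrel_def using Lp_1[OF LC l] Lp_1[OF RC r] by blast
  then show ?thesis unfolding reach_def using g h by blast
qed

lemma path_words: "length xs = length ys \<Longrightarrow> set xs \<subseteq> L \<Longrightarrow> set ys \<subseteq> R \<Longrightarrow> g \<in> carrier G \<Longrightarrow>
   path2S G L R g (inv (wprod G xs) \<otimes> g \<otimes> wprod G ys)"
proof (induction xs arbitrary: ys g)
  case Nil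
  then show ?case by (simp add: path2S_def)
next
  case (Cons l xs)
  then obtain r ys' where ys: "ys = r # ys'" by (cases ys) auto
  have l: "l \<in> carrier G" and r: "r \<in> carrier G" using Cons ys LC RC by auto
  have wx: "wprod G xs \<in> carrier G" and wy: "wprod G ys' \<in> carrier G"
    using Cons ys LC RC by (auto intro!: wprod_closed)
  define g1 where "g1 = inv l \<otimes> g \<otimes> r"
  have g1: "g1 \<in> carrier G" using l r Cons by (simp add: g1_def)
  have "arc2S G L R g g1" unfolding arc2S_def g1_def using Cons ys l r by auto
  moreover have "path2S G L R g1 (inv (wprod G xs) \<otimes> g1 \<otimes> wprod G ys')"
    using Cons ys g1 by auto
  moreover have "inv (wprod G xs) \<otimes> g1 \<otimes> wprod G ys' = inv (wprod G (l # xs)) \<otimes> g \<otimes> wprod G ys"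
    using l r wx wy Cons by (simp add: g1_def ys m_assoc inv_mult_group)
  ultimately show ?case unfolding path2S_def
    by (metis converse_rtranclp_into_rtranclp)
qed

lemma path_iff: "g \<in> carrier G \<Longrightarrow> path2S G L R g h \<longleftrightarrow> reach g h"
proof
  assume g: "g \<in> carrier G" and "path2S G L R g h"
  then have "(arc2S G L R)\<^sup>*\<^sup>* g h" unfolding path2S_def by simp
  then show "reach g h"
  proof (induction rule: rtranclp_induct)
    case base then show ?case using reach_refl g by blast
  next
    case (step y z) then show ?case using arc_reach reach_trans by blast
  qed
next
  assume "reach g h"
  then obtain x y where g: "g \<in> carrier G" and H: "Hrel x y" and h: "h = inv x \<otimes> g \<otimes> y"
    unfolding reach_def by blast
  then obtain N where "x \<in> Lp G L N" "y \<in> Lp G R N" unfolding Hrel_def by blast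
  then obtain xs ys where "x = wprod G xs" "y = wprod G ys" "length xs = N" "length ys = N"
    "set xs \<subseteq> L" "set ys \<subseteq> R" unfolding Lp_def by blast
  then show "path2S G L R g h" using path_words g h by simp
qed

lemma sc_iff: "g \<in> carrier G \<Longrightarrow> strongly_conn G L R g h \<longleftrightarrow> reach g h"
  unfolding strongly_conn_def using path_iff reach_sym reach_carrier by blast

definition comp where "comp g = {h \<in> carrier G. strongly_conn G L R g h}"

lemma comp_eq: "g \<in> carrier G \<Longrightarrow> comp g = {h. reach g h}"
  unfolding comp_def using sc_iff reach_carrier by blast

lemma comp_eq_iff: "g \<in> carrier G \<Longrightarrow> h \<in> carrier G \<Longrightarrow> comp g = comp h \<longleftrightarrow> reach g h"
proof
  assume g: "g \<in> carrier G" and h: "h \<in> carrier G"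
  { assume "comp g = comp h"
    then have "h \<in> comp g" using comp_eq h reach_refl by auto
    then show "reach g h" using comp_eq g by auto }
  { assume "reach g h"
    then show "comp g = comp h" using comp_eq g h reach_sym reach_trans by blast }
qed

lemma SCCs_eq: "SCCs G L R = comp ` carrier G"
  unfolding SCCs_def comp_def by auto

lemma comp_lmult: "c \<in> W G L \<Longrightarrow> g \<in> carrier G \<Longrightarrow> comp (c \<otimes> g) = (\<lambda>h. c \<otimes> h) ` comp g"
proof -
  assume c: "c \<in> W G L" and g: "g \<in> carrier G"
  have cC: "c \<in> carrier G" by (rule subgroup.mem_carrier[OF WL c])
  have icW: "inv c \<in> W G L" by (rule subgroup.m_inv_closed[OF WL c])
  have cg: "c \<otimes> g \<in> carrier G" using cC g by simp
  show ?thesis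
  proof
    show "comp (c \<otimes> g) \<subseteq> (\<lambda>h. c \<otimes> h) ` comp g"
    proof
      fix h' assume "h' \<in> comp (c \<otimes> g)"
      then have "reach (c \<otimes> g) h'" using comp_eq cg by auto
      then obtain x y where H: "Hrel x y" and h': "h' = inv x \<otimes> (c \<otimes> g) \<otimes> y"
        unfolding reach_def by blast
      have xy: "x \<in> carrier G" "y \<in> carrier G" using Hrel_carrier[OF H] by auto
      have H2: "Hrel (inv c \<otimes> x \<otimes> inv (inv c)) y" using Hrel_conj[OF icW H] .
      have "inv c \<otimes> h' = inv (inv c \<otimes> x \<otimes> inv (inv c)) \<otimes> g \<otimes> y"
        using xy cC g by (simp add: h' m_assoc inv_mult_group)
      then have "reach g (inv c \<otimes> h')" unfolding reach_def using g H2 by blast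
      then have "inv c \<otimes> h' \<in> comp g" using comp_eq g by auto
      moreover have "h' = c \<otimes> (inv c \<otimes> h')"
        using xy cC g h' by simp
      ultimately show "h' \<in> (\<lambda>h. c \<otimes> h) ` comp g" by (rule rev_image_eqI)
    qed
    show "(\<lambda>h. c \<otimes> h) ` comp g \<subseteq> comp (c \<otimes> g)"
    proof clarify
      fix h assume "h \<in> comp g"
      then have "reach g h" using comp_eq g by auto
      then obtain x y where H: "Hrel x y" and h: "h = inv x \<otimes> g \<otimes> y"
        unfolding reach_def by blast
      have xy: "x \<in> carrier G" "y \<in> carrier G" using Hrel_carrier[OF H] by auto
      have H2: "Hrel (c \<otimes> x \<otimes> inv c) y" using Hrel_conj[OF c H] .
      have "c \<otimes> h = inv (c \<otimes> x \<otimes> inv c) \<otimes> (c \<otimes> g) \<otimes> y"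
        using xy cC g by (simp add: h m_assoc inv_mult_group)
      then have "reach (c \<otimes> g) (c \<otimes> h)" unfolding reach_def using cg H2 by blast
      then show "c \<otimes> h \<in> comp (c \<otimes> g)" using comp_eq cg by auto
    qed
  qed
qed


lemma Lp_W: "x \<in> Lp G L n \<Longrightarrow> x \<in> W G L" using Lp_in_W[OF WL] .
lemma Lp_WR: "x \<in> Lp G R n \<Longrightarrow> x \<in> W G R" using Lp_in_W[OF WR] .

lemma Hrel_Lp: "x \<in> Lp G L n \<Longrightarrow> y \<in> Lp G R n \<Longrightarrow> Hrel x y"
  unfolding Hrel_def by blast

lemma arc_carrier: "arc2S G L R g h \<Longrightarrow> g \<in> carrier G \<and> h \<in> carrier G"
  unfolding arc2S_def by blast

lemma F_path: 
  assumes arc: "\<And>g h. g \<in> carrier G \<Longrightarrow> h \<in> carrier G \<Longrightarrow> arc2S G L R (F g) (F h) \<longleftrightarrow> arc2S G L R g h"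
    and FC: "\<And>g. g \<in> carrier G \<Longrightarrow> F g \<in> carrier G"
  shows "path2S G L R a b \<Longrightarrow> path2S G L R (F a) (F b)"
  unfolding path2S_def
proof (induction rule: rtranclp_induct)
  case base then show ?case by simp
next
  case (step y z)
  then have "arc2S G L R (F y) (F z)" using arc arc_carrier by blast
  then show ?case using step by (metis rtranclp.rtrancl_into_rtrancl)
qed

lemma F_comp:
  assumes bij: "bij_betw F (carrier G) (carrier G)"
    and arc: "\<And>g h. g \<in> carrier G \<Longrightarrow> h \<in> carrier G \<Longrightarrow> arc2S G L R (F g) (F h) \<longleftrightarrow> arc2S G L R g h"
    and g: "g \<in> carrier G"
  shows "F ` comp g = comp (F g)" "sub_digraph_iso G L R (comp g) (comp (F g))"
proof -
  define F' where "F' = inv_into (carrier G) F"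
  have FC: "\<And>g. g \<in> carrier G \<Longrightarrow> F g \<in> carrier G" using bij bij_betwE by blast
  have bij': "bij_betw F' (carrier G) (carrier G)" unfolding F'_def using bij bij_betw_inv_into by blast
  have F'C: "\<And>g. g \<in> carrier G \<Longrightarrow> F' g \<in> carrier G" using bij' bij_betwE by blast
  have FF': "\<And>g. g \<in> carrier G \<Longrightarrow> F (F' g) = g" unfolding F'_def using bij
    by (simp add: bij_betw_def f_inv_into_f)
  have F'F: "\<And>g. g \<in> carrier G \<Longrightarrow> F' (F g) = g" unfolding F'_def using bij
    by (simp add: bij_betw_def inv_into_f_f)
  have arc': "\<And>g h. g \<in> carrier G \<Longrightarrow> h \<in> carrier G \<Longrightarrow> arc2S G L R (F' g) (F' h) \<longleftrightarrow> arc2S G L R g h"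
    using arc F'C FF' by metis
  have pathiff: "path2S G L R (F a) (F b) \<longleftrightarrow> path2S G L R a b" if "a \<in> carrier G" "b \<in> carrier G" for a b
    using F_path[OF arc FC, of a b] F_path[OF arc' F'C, of "F a" "F b"] F'F that by auto
  have scF: "strongly_conn G L R (F a) (F b) \<longleftrightarrow> strongly_conn G L R a b" if "a \<in> carrier G" "b \<in> carrier G" for a b
    unfolding strongly_conn_def using pathiff that by blast
  show im: "F ` comp g = comp (F g)"
  proof
    show "F ` comp g \<subseteq> comp (F g)" unfolding comp_def using scF g FC by auto
    show "comp (F g) \<subseteq> F ` comp g"
    proof
      fix h assume h: "h \<in> comp (F g)"
      then have hC: "h \<in> carrier G" unfolding comp_def by auto
      have "F' h \<in> comp g" unfolding comp_def using h hC F'C FF'[OF hC] scF[OF g F'C[OF hC]] unfolding comp_def by auto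
      then show "h \<in> F ` comp g" using FF'[OF hC] by (metis image_eqI)
    qed
  qed
  have sub: "comp g \<subseteq> carrier G" unfolding comp_def by auto
  have "inj_on F (comp g)" using bij sub unfolding bij_betw_def by (meson inj_on_subset)
  then have "bij_betw F (comp g) (comp (F g))" using im by (simp add: bij_betw_def)
  then show "sub_digraph_iso G L R (comp g) (comp (F g))"
    unfolding sub_digraph_iso_def using arc sub by blast
qed

lemma conj_prop:
  assumes S: "S \<subseteq> carrier G" and c: "c \<in> carrier G" and P: "(\<lambda>l. inv c \<otimes> l \<otimes> c) ` S = S" and x: "x \<in> S"
  shows "c \<otimes> x \<otimes> inv c \<in> S" "inv c \<otimes> x \<otimes> c \<in> S"
proof -
  show "inv c \<otimes> x \<otimes> c \<in> S" using P x by blast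
  obtain l where l: "l \<in> S" "x = inv c \<otimes> l \<otimes> c" using P x by blast
  have "l \<in> carrier G" using l S by blast
  then have "c \<otimes> x \<otimes> inv c = l" using l c by (simp add: m_assoc)
  then show "c \<otimes> x \<otimes> inv c \<in> S" using l by simp
qed

lemma conj_mult:
  assumes S: "S \<subseteq> carrier G" and c: "c \<in> carrier G" and d: "d \<in> carrier G"
    and P: "(\<lambda>l. inv c \<otimes> l \<otimes> c) ` S = S" and P': "(\<lambda>l. inv d \<otimes> l \<otimes> d) ` S = S"
  shows "(\<lambda>l. inv (c \<otimes> d) \<otimes> l \<otimes> (c \<otimes> d)) ` S = S"
proof -
  have "(\<lambda>l. inv (c \<otimes> d) \<otimes> l \<otimes> (c \<otimes> d)) ` S = (\<lambda>l. inv d \<otimes> l \<otimes> d) ` ((\<lambda>l. inv c \<otimes> l \<otimes> c) ` S)"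
    unfolding image_image
  proof (rule image_cong[OF refl])
    fix l assume "l \<in> S" then have "l \<in> carrier G" using S by blast
    then show "inv (c \<otimes> d) \<otimes> l \<otimes> (c \<otimes> d) = inv d \<otimes> (inv c \<otimes> l \<otimes> c) \<otimes> d"
      using c d by (simp add: m_assoc inv_mult_group)
  qed
  then show ?thesis using P P' by simp
qed

lemma conj_rep:
  assumes S: "S \<subseteq> carrier G" and c: "c \<in> carrier G" and P: "(\<lambda>l. inv c \<otimes> l \<otimes> c) ` S = S"
  shows "(\<lambda>l. inv (wprod G (replicate j c)) \<otimes> l \<otimes> wprod G (replicate j c)) ` S = S"
proof (induction j)
  case 0
  have "(\<lambda>l. inv \<one> \<otimes> l \<otimes> \<one>) ` S = (\<lambda>l. l) ` S"
    by (rule image_cong[OF refl]) (use S in auto)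
  then show ?case by simp
next
  case (Suc j)
  have "wprod G (replicate j c) \<in> carrier G" using c by (intro wprod_closed) auto
  then show ?case using conj_mult[OF S c _ P Suc] by simp
qed

lemma lmult_arc:
  assumes c: "c \<in> carrier G" and P: "(\<lambda>l. inv c \<otimes> l \<otimes> c) ` L = L"
    and g: "g \<in> carrier G" and h: "h \<in> carrier G"
  shows "arc2S G L R (c \<otimes> g) (c \<otimes> h) \<longleftrightarrow> arc2S G L R g h"
proof
  assume "arc2S G L R (c \<otimes> g) (c \<otimes> h)"
  then obtain l r where l: "l \<in> L" and r: "r \<in> R" and e: "c \<otimes> h = inv l \<otimes> (c \<otimes> g) \<otimes> r"
    unfolding arc2S_def by blast
  have lC: "l \<in> carrier G" and rC: "r \<in> carrier G" using l r LC RC by auto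
  have "h = inv c \<otimes> (c \<otimes> h)" using c h by simp
  also have "\<dots> = inv (inv c \<otimes> l \<otimes> c) \<otimes> g \<otimes> r" using e c g lC rC by (simp add: m_assoc inv_mult_group)
  finally show "arc2S G L R g h" unfolding arc2S_def using g h r conj_prop(2)[OF LC c P l] by blast
next
  assume "arc2S G L R g h"
  then obtain l r where l: "l \<in> L" and r: "r \<in> R" and e: "h = inv l \<otimes> g \<otimes> r"
    unfolding arc2S_def by blast
  have lC: "l \<in> carrier G" and rC: "r \<in> carrier G" using l r LC RC by auto
  have "c \<otimes> h = inv (c \<otimes> l \<otimes> inv c) \<otimes> (c \<otimes> g) \<otimes> r" using e c g lC rC by (simp add: m_assoc inv_mult_group)
  moreover have "c \<otimes> g \<in> carrier G" "c \<otimes> h \<in> carrier G" using c g h by auto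
  ultimately show "arc2S G L R (c \<otimes> g) (c \<otimes> h)" unfolding arc2S_def using r conj_prop(1)[OF LC c P l] by blast
qed

lemma rmult_arc:
  assumes c: "c \<in> carrier G" and P: "(\<lambda>l. inv c \<otimes> l \<otimes> c) ` R = R"
    and g: "g \<in> carrier G" and h: "h \<in> carrier G"
  shows "arc2S G L R (g \<otimes> c) (h \<otimes> c) \<longleftrightarrow> arc2S G L R g h"
proof
  assume "arc2S G L R (g \<otimes> c) (h \<otimes> c)"
  then obtain l r where l: "l \<in> L" and r: "r \<in> R" and e: "h \<otimes> c = inv l \<otimes> (g \<otimes> c) \<otimes> r"
    unfolding arc2S_def by blast
  have lC: "l \<in> carrier G" and rC: "r \<in> carrier G" using l r LC RC by auto
  have "h = (h \<otimes> c) \<otimes> inv c" using c h by (simp add: m_assoc)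
  also have "\<dots> = inv l \<otimes> g \<otimes> (c \<otimes> r \<otimes> inv c)" using e c g lC rC by (simp add: m_assoc)
  finally show "arc2S G L R g h" unfolding arc2S_def using g h l conj_prop(1)[OF RC c P r] by blast
next
  assume "arc2S G L R g h"
  then obtain l r where l: "l \<in> L" and r: "r \<in> R" and e: "h = inv l \<otimes> g \<otimes> r"
    unfolding arc2S_def by blast
  have lC: "l \<in> carrier G" and rC: "r \<in> carrier G" using l r LC RC by auto
  have "h \<otimes> c = inv l \<otimes> (g \<otimes> c) \<otimes> (inv c \<otimes> r \<otimes> c)" using e c g lC rC by (simp add: m_assoc)
  moreover have "g \<otimes> c \<in> carrier G" "h \<otimes> c \<in> carrier G" using c g h by auto
  ultimately show "arc2S G L R (g \<otimes> c) (h \<otimes> c)" unfolding arc2S_def using l conj_prop(2)[OF RC c P r] by blast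
qed

end

locale twoSs = twoS +
  fixes s assumes sC: "s \<in> carrier G"
begin

definition l1 where "l1 = (SOME l. l \<in> L)"
lemma l1: "l1 \<in> L" unfolding l1_def using Lne some_in_eq by blast
lemma l1C: "l1 \<in> carrier G" using l1 LC by blast

definition lw where "lw n = wprod G (replicate n l1)"
lemma lw: "lw n \<in> Lp G L n" unfolding lw_def using Lp_rep[OF l1] .
lemma lwC: "lw n \<in> carrier G" using lw LpL_carrier by blast

definition Q where "Q n = comp (lw n \<otimes> s)"

definition D where "D = double_coset G L s R"

lemma same_len_reach: "w \<in> Lp G L n \<Longrightarrow> w' \<in> Lp G L n \<Longrightarrow> g \<in> carrier G \<Longrightarrow> reach (w \<otimes> g) (w' \<otimes> g)"
proof -
  assume w: "w \<in> Lp G L n" and w': "w' \<in> Lp G L n" and g: "g \<in> carrier G"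
  have wC: "w \<in> carrier G" and w'C: "w' \<in> carrier G" using w w' LpL_carrier by auto
  obtain m where m: "inv w' \<in> Lp G L m" "\<one> \<in> Lp G L (n+m)" using inv_len[OF LC WL w'] by blast
  have x: "w \<otimes> inv w' \<in> Lp G L (n+m)" using Lp_mult[OF LC w m(1)] .
  obtain \<beta> where \<beta>: "\<beta> \<ge> 1" "\<one> \<in> Lp G R \<beta>" using one_R by blast
  obtain b where b: "\<beta> = Suc b" using \<beta> by (cases \<beta>) auto
  have one0: "\<one> \<in> Lp G R 0" by (simp add: Lp_0)
  have "(n+m) + b*(n+m) = 0 + (n+m)*\<beta>" by (simp add: b algebra_simps)
  then have H: "Hrel (w \<otimes> inv w') \<one>" by (rule Hrel_pad[OF x one0 m(2) \<beta>(2)])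
  have "w' \<otimes> g = inv (w \<otimes> inv w') \<otimes> (w \<otimes> g) \<otimes> \<one>"
    using wC w'C g by (simp add: m_assoc inv_mult_group)
  then show ?thesis unfolding reach_def using H wC g by blast
qed

lemma Q_indep: "w \<in> Lp G L n \<Longrightarrow> comp (w \<otimes> s) = Q n"
proof -
  assume w: "w \<in> Lp G L n"
  have "reach (w \<otimes> s) (lw n \<otimes> s)" using same_len_reach[OF w lw sC] .
  moreover have "w \<otimes> s \<in> carrier G" "lw n \<otimes> s \<in> carrier G" using w LpL_carrier sC lwC by auto
  ultimately show ?thesis unfolding Q_def using comp_eq_iff by blast
qed

lemma Q0: "Q 0 = comp s"
  unfolding Q_def lw_def using sC by simp

lemma Q_one: "\<one> \<in> Lp G L n \<Longrightarrow> Q n = Q 0"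
  using Q_indep[of \<one> n] sC Q0 by simp

lemma Q_shift: "Q n = Q n' \<Longrightarrow> Q (j + n) = Q (j + n')"
proof -
  assume e: "Q n = Q n'"
  have vW: "lw j \<in> W G L" using Lp_W[OF lw] .
  have "Q (j + n) = comp (lw j \<otimes> (lw n \<otimes> s))"
    using Q_indep[OF Lp_mult[OF LC lw lw, of j n]] lwC sC by (simp add: m_assoc)
  also have "\<dots> = (\<lambda>h. lw j \<otimes> h) ` Q n" unfolding Q_def using comp_lmult[OF vW] lwC sC by simp
  also have "\<dots> = (\<lambda>h. lw j \<otimes> h) ` Q n'" using e by simp
  also have "\<dots> = comp (lw j \<otimes> (lw n' \<otimes> s))" unfolding Q_def using comp_lmult[OF vW] lwC sC by simp
  also have "\<dots> = Q (j + n')"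
    using Q_indep[OF Lp_mult[OF LC lw lw, of j n']] lwC sC by (simp add: m_assoc)
  finally show ?thesis .
qed

lemma D_iff: "g \<in> D \<longleftrightarrow> (\<exists>a b. a \<in> W G L \<and> b \<in> W G R \<and> g = a \<otimes> s \<otimes> b)"
  unfolding D_def double_coset_def using generate_eq_W[OF LC WL] generate_eq_W[OF RC WR] by auto

lemma D_carrier: "g \<in> D \<Longrightarrow> g \<in> carrier G"
proof -
  assume "g \<in> D"
  then obtain a b where a: "a \<in> W G L" and b: "b \<in> W G R" and g: "g = a \<otimes> s \<otimes> b" using D_iff by blast
  have "a \<in> carrier G" by (rule subgroup.mem_carrier[OF WL a])
  moreover have "b \<in> carrier G" by (rule subgroup.mem_carrier[OF WR b])
  ultimately show ?thesis using g sC by simp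
qed

lemma comp_sub_D: "g \<in> D \<Longrightarrow> comp g \<subseteq> D"
proof
  fix h assume gD: "g \<in> D" and "h \<in> comp g"
  then have gC: "g \<in> carrier G" using D_carrier by blast
  then have "reach g h" using \<open>h \<in> comp g\<close> comp_eq by auto
  then obtain x y where H: "Hrel x y" and h: "h = inv x \<otimes> g \<otimes> y" unfolding reach_def by blast
  obtain N where N: "x \<in> Lp G L N" "y \<in> Lp G R N" using H unfolding Hrel_def by blast
  have xW: "x \<in> W G L" using Lp_W[OF N(1)] .
  have yW: "y \<in> W G R" using Lp_WR[OF N(2)] .
  obtain a b where a: "a \<in> W G L" and b: "b \<in> W G R" and g: "g = a \<otimes> s \<otimes> b" using gD D_iff by blast
  have aC: "a \<in> carrier G" by (rule subgroup.mem_carrier[OF WL a])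
  have bC: "b \<in> carrier G" by (rule subgroup.mem_carrier[OF WR b])
  have xC: "x \<in> carrier G" by (rule subgroup.mem_carrier[OF WL xW])
  have yC: "y \<in> carrier G" by (rule subgroup.mem_carrier[OF WR yW])
  have ixW: "inv x \<in> W G L" by (rule subgroup.m_inv_closed[OF WL xW])
  have a2: "inv x \<otimes> a \<in> W G L" by (rule subgroup.m_closed[OF WL ixW a])
  have b2: "b \<otimes> y \<in> W G R" by (rule subgroup.m_closed[OF WR b yW])
  have "h = (inv x \<otimes> a) \<otimes> s \<otimes> (b \<otimes> y)" using aC bC xC yC sC by (simp add: h g m_assoc)
  then show "h \<in> D" using D_iff a2 b2 by blast
qed

lemma Q_SCC: "Q n \<in> SCCs G L R" 
  unfolding SCCs_eq Q_def using lwC sC by simp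

lemma lws_D: "lw n \<otimes> s \<in> D"
proof -
  have "lw n \<in> W G L" using Lp_W[OF lw] .
  moreover have "\<one> \<in> W G R" by (rule subgroup.one_closed[OF WR])
  moreover have "lw n \<otimes> s = lw n \<otimes> s \<otimes> \<one>" using lwC sC by simp
  ultimately show ?thesis using D_iff by blast
qed

lemma Q_sub_D: "Q n \<subseteq> D" unfolding Q_def using comp_sub_D[OF lws_D] .

lemma comp_is_Q: "g \<in> carrier G \<Longrightarrow> comp g \<subseteq> D \<Longrightarrow> \<exists>n. comp g = Q n"
proof -
  assume gC: "g \<in> carrier G" and sub: "comp g \<subseteq> D"
  have "g \<in> comp g" using comp_eq[OF gC] reach_refl[OF gC] by blast
  then have "g \<in> D" using sub by blast
  then obtain a b where a: "a \<in> W G L" and b: "b \<in> W G R" and g: "g = a \<otimes> s \<otimes> b" using D_iff by blast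
  have aC: "a \<in> carrier G" by (rule subgroup.mem_carrier[OF WL a])
  have bC: "b \<in> carrier G" by (rule subgroup.mem_carrier[OF WR b])
  have ib: "inv b \<in> W G R" by (rule subgroup.m_inv_closed[OF WR b])
  then obtain m where m: "inv b \<in> Lp G R m" unfolding W_iff by blast
  have H: "Hrel (lw m) (inv b)" using Hrel_Lp[OF lw m] .
  have "inv (lw m) \<otimes> g \<otimes> inv b = (inv (lw m) \<otimes> a) \<otimes> s"
    using aC bC sC lwC by (simp add: g m_assoc)
  then have r: "reach g ((inv (lw m) \<otimes> a) \<otimes> s)" unfolding reach_def using gC H by metis
  have ilW: "inv (lw m) \<in> W G L" by (rule subgroup.m_inv_closed[OF WL Lp_W[OF lw]])
  have cW: "inv (lw m) \<otimes> a \<in> W G L" by (rule subgroup.m_closed[OF WL ilW a])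
  then obtain n where n: "inv (lw m) \<otimes> a \<in> Lp G L n" unfolding W_iff by blast
  have "comp g = comp ((inv (lw m) \<otimes> a) \<otimes> s)"
    using comp_eq_iff[OF gC] r reach_carrier by blast
  then show ?thesis using Q_indep[OF n] by blast
qed

lemma Comps_eq: "{C \<in> SCCs G L R. C \<subseteq> D} = range Q"
proof
  show "{C \<in> SCCs G L R. C \<subseteq> D} \<subseteq> range Q"
    unfolding SCCs_eq using comp_is_Q by blast
  show "range Q \<subseteq> {C \<in> SCCs G L R. C \<subseteq> D}"
    using Q_SCC Q_sub_D by blast
qed

lemma D_union: "D = \<Union>{C \<in> SCCs G L R. C \<subseteq> D}"
proof
  show "D \<subseteq> \<Union>{C \<in> SCCs G L R. C \<subseteq> D}"
  proof
    fix g assume gD: "g \<in> D"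
    then have gC: "g \<in> carrier G" using D_carrier by blast
    have "comp g \<in> SCCs G L R" unfolding SCCs_eq using gC by blast
    moreover have "comp g \<subseteq> D" using comp_sub_D[OF gD] .
    moreover have "g \<in> comp g" using comp_eq[OF gC] reach_refl[OF gC] by blast
    ultimately show "g \<in> \<Union>{C \<in> SCCs G L R. C \<subseteq> D}" by blast
  qed
  show "\<Union>{C \<in> SCCs G L R. C \<subseteq> D} \<subseteq> D" by blast
qed


lemma Q_period: "\<exists>p. p \<ge> 1 \<and> Q p = Q 0"
  using one_L Q_one by blast

definition kk where "kk = (LEAST n. n \<ge> 1 \<and> Q n = Q 0)"

lemma kk: "kk \<ge> 1" "Q kk = Q 0"
  using LeastI_ex[OF Q_period] unfolding kk_def by auto

lemma kk_le: "n \<ge> 1 \<Longrightarrow> Q n = Q 0 \<Longrightarrow> kk \<le> n"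
  unfolding kk_def by (rule Least_le) simp

lemma Q_mod: "Q n = Q (n mod kk)"
proof (induction n rule: less_induct)
  case (less n)
  show ?case
  proof (cases "n < kk")
    case True then show ?thesis by simp
  next
    case False
    then have le: "kk \<le> n" by simp
    have "Q n = Q ((n - kk) + kk)" using le by simp
    also have "\<dots> = Q ((n - kk) + 0)" using Q_shift[OF kk(2)] .
    also have "\<dots> = Q ((n - kk) mod kk)" using less[of "n - kk"] kk(1) le by simp
    also have "(n - kk) mod kk = n mod kk" using le by (simp add: le_mod_geq)
    finally show ?thesis .
  qed
qed

lemma Q_inj: "inj_on Q {..<kk}"
proof (rule inj_onI, rule ccontr)
  fix i j assume i: "i \<in> {..<kk}" and j: "j \<in> {..<kk}" and e: "Q i = Q j" and ne: "i \<noteq> j"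
  have main: "False" if ij: "i < j" "j < kk" and e: "Q i = Q j" for i j
  proof -
    define t where "t = kk * i - i"
    obtain d where d: "j = i + d" using ij by (metis less_imp_add_positive)
    have ti: "t + i = kk * i" unfolding t_def using kk(1) by (simp add: mult_le_mono)
    have tj: "t + j = kk * i + d" using ti d by simp
    have "Q (t + i) = Q (t + j)" using Q_shift[OF e] .
    then have "Q (kk * i) = Q (kk * i + d)" using ti tj by simp
    moreover have "Q (kk * i) = Q 0" using Q_mod[of "kk * i"] by simp
    moreover have "(kk * i + d) mod kk = d" using ij d by (metis add.commute mod_less mod_mult_self2 add_less_cancel_left le_less_trans le_add2)
    then have "Q (kk * i + d) = Q (j - i)" using Q_mod[of "kk * i + d"] d by simp
    ultimately have "Q (j - i) = Q 0" by simp
    then have "kk \<le> j - i" using kk_le ij by simp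
    then show False using ij by simp
  qed
  show False
  proof (cases "i < j")
    case True then show ?thesis using main j e by auto
  next
    case False then have "j < i" using ne by simp
    then show ?thesis using main i e by auto
  qed
qed

lemma range_Q: "range Q = Q ` {..<kk}"
proof
  show "range Q \<subseteq> Q ` {..<kk}"
  proof
    fix C assume "C \<in> range Q"
    then obtain n where "C = Q n" by blast
    then have "C = Q (n mod kk)" using Q_mod by simp
    moreover have "n mod kk < kk" using kk(1) by simp
    ultimately show "C \<in> Q ` {..<kk}" by blast
  qed
qed auto

lemma card_Comps: "finite {C \<in> SCCs G L R. C \<subseteq> D}" "card {C \<in> SCCs G L R. C \<subseteq> D} = kk"
  using Comps_eq range_Q card_image[OF Q_inj] by auto

lemma sc_s: "g \<in> carrier G \<Longrightarrow> strongly_conn G L R g s \<longleftrightarrow> comp g = Q 0"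
  using sc_iff comp_eq_iff sC Q0 by auto

lemma wprod_map_inv: "set ys \<subseteq> carrier G \<Longrightarrow> wprod G (map (\<lambda>x. inv x) ys) = inv (wprod G (rev ys))"
proof (induction ys)
  case Nil then show ?case by simp
next
  case (Cons y ys)
  have yC: "y \<in> carrier G" and ysC: "set ys \<subseteq> carrier G" using Cons by auto
  have wC: "wprod G (rev ys) \<in> carrier G" using ysC by (intro wprod_closed) auto
  have "wprod G (rev (y # ys)) = wprod G (rev ys) \<otimes> y"
    using ysC yC by (simp add: wprod_append)
  then show ?case using Cons ysC yC wC by (simp add: inv_mult_group)
qed

lemma len_Q: "xs \<noteq> [] \<Longrightarrow> set xs \<subseteq> L \<or> set xs \<subseteq> (\<lambda>l. inv l) ` L \<Longrightarrow>
   strongly_conn G L R (wprod G xs \<otimes> s) s \<Longrightarrow> Q (length xs) = Q 0"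
proof -
  assume ne: "xs \<noteq> []" and S: "set xs \<subseteq> L \<or> set xs \<subseteq> (\<lambda>l. inv l) ` L"
    and sc: "strongly_conn G L R (wprod G xs \<otimes> s) s"
  define n where "n = length xs"
  show ?thesis
  proof (cases "set xs \<subseteq> L")
    case True
    then have w: "wprod G xs \<in> Lp G L n" unfolding Lp_def n_def by blast
    have "wprod G xs \<otimes> s \<in> carrier G" using LpL_carrier[OF w] sC by simp
    then have "comp (wprod G xs \<otimes> s) = Q 0" using sc_s sc by blast
    then show ?thesis using Q_indep[OF w] n_def by simp
  next
    case False
    then have S2: "set xs \<subseteq> (\<lambda>l. inv l) ` L" using S by blast
    define ys where "ys = map (\<lambda>x. inv x) xs"
    have xsC: "set xs \<subseteq> carrier G" using S2 LC by auto
    have ysL: "set ys \<subseteq> L"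
    proof
      fix y assume "y \<in> set ys"
      then obtain x where x: "x \<in> set xs" "y = inv x" unfolding ys_def by auto
      then obtain l where "l \<in> L" "x = inv l" using S2 by blast
      then show "y \<in> L" using x LC by auto
    qed
    have "map (\<lambda>x. inv x) ys = xs" unfolding ys_def using xsC by (induction xs) auto
    then have wx: "wprod G xs = inv (wprod G (rev ys))" using wprod_map_inv ysL LC by force
    have w': "wprod G (rev ys) \<in> Lp G L n" unfolding Lp_def n_def ys_def
      using ysL unfolding ys_def by (intro CollectI exI[of _ "rev (map (\<lambda>x. inv x) xs)"]) auto
    obtain m where m: "inv (wprod G (rev ys)) \<in> Lp G L m" "\<one> \<in> Lp G L (n+m)"
      using inv_len[OF LC WL w'] by blast
    have "wprod G xs \<otimes> s \<in> carrier G" using xsC sC wprod_closed by simp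
    then have "comp (wprod G xs \<otimes> s) = Q 0" using sc_s sc by blast
    then have "Q m = Q 0" using Q_indep[OF m(1)] wx by simp
    then have "Q (n + m) = Q (n + 0)" by (rule Q_shift)
    then show ?thesis using Q_one[OF m(2)] n_def by simp
  qed
qed

lemma k_eq: "min_sc_length G L R s = enat kk"
proof -
  define S where "S = {enat (length xs) | xs. xs \<noteq> [] \<and>
      (set xs \<subseteq> L \<or> set xs \<subseteq> (\<lambda>l. inv l) ` L) \<and>
      strongly_conn G L R (wprod G xs \<otimes> s) s}"
  have "min_sc_length G L R s = Inf S" unfolding min_sc_length_def S_def by simp
  moreover have "enat kk \<in> S"
  proof -
    have "lw kk \<otimes> s \<in> carrier G" using lwC sC by simp
    then have "strongly_conn G L R (lw kk \<otimes> s) s" using sc_s kk(2) Q_def by simp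
    moreover have "replicate kk l1 \<noteq> []" using kk(1) by simp
    ultimately show ?thesis unfolding S_def lw_def using l1
      by (intro CollectI exI[of _ "replicate kk l1"]) auto
  qed
  moreover have "\<And>e. e \<in> S \<Longrightarrow> enat kk \<le> e"
  proof -
    fix e assume "e \<in> S"
    then obtain xs where xs: "e = enat (length xs)" "xs \<noteq> []"
      "set xs \<subseteq> L \<or> set xs \<subseteq> (\<lambda>l. inv l) ` L" "strongly_conn G L R (wprod G xs \<otimes> s) s"
      unfolding S_def by blast
    then have "Q (length xs) = Q 0" using len_Q by blast
    moreover have "length xs \<ge> 1" using xs(2) by (cases xs) auto
    ultimately show "enat kk \<le> e" using kk_le xs(1) by simp
  qed
  ultimately show ?thesis by (metis Inf_lower Inf_greatest antisym)
qed


lemma Q_eqpoll: "Q n \<approx> comp s"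
proof -
  have "Q n = (\<lambda>h. lw n \<otimes> h) ` comp s"
    unfolding Q_def using comp_lmult[OF Lp_W[OF lw] sC] .
  moreover have "inj_on (\<lambda>h. lw n \<otimes> h) (comp s)"
    using lwC unfolding comp_def by (auto intro!: inj_onI)
  ultimately have "bij_betw (\<lambda>h. lw n \<otimes> h) (comp s) (Q n)" by (simp add: bij_betw_def)
  then show ?thesis using eqpoll_sym unfolding eqpoll_def by blast
qed

lemma Comps_eqpoll: "C1 \<in> {C \<in> SCCs G L R. C \<subseteq> D} \<Longrightarrow> C2 \<in> {C \<in> SCCs G L R. C \<subseteq> D} \<Longrightarrow> C1 \<approx> C2"
proof -
  assume "C1 \<in> {C \<in> SCCs G L R. C \<subseteq> D}" "C2 \<in> {C \<in> SCCs G L R. C \<subseteq> D}"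
  then obtain n1 n2 where n: "C1 = Q n1" "C2 = Q n2" using Comps_eq by auto
  have "Q n1 \<approx> comp s" by (rule Q_eqpoll)
  moreover have "comp s \<approx> Q n2" by (rule eqpoll_sym[OF Q_eqpoll])
  ultimately show ?thesis using n eqpoll_trans by metis
qed

lemma bij_lmult: "c \<in> carrier G \<Longrightarrow> bij_betw (\<lambda>g. c \<otimes> g) (carrier G) (carrier G)"
proof -
  assume c: "c \<in> carrier G"
  have "inj_on (\<lambda>g. c \<otimes> g) (carrier G)" using c by (auto intro!: inj_onI)
  moreover have "(\<lambda>g. c \<otimes> g) ` carrier G = carrier G"
  proof
    show "carrier G \<subseteq> (\<lambda>g. c \<otimes> g) ` carrier G"
    proof
      fix y assume y: "y \<in> carrier G"
      then have "y = c \<otimes> (inv c \<otimes> y)" using c by simp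
      then show "y \<in> (\<lambda>g. c \<otimes> g) ` carrier G" using c y by (metis image_eqI inv_closed m_closed)
    qed
  qed (use c in auto)
  ultimately show ?thesis by (simp add: bij_betw_def)
qed

lemma bij_rmult: "c \<in> carrier G \<Longrightarrow> bij_betw (\<lambda>g. g \<otimes> c) (carrier G) (carrier G)"
proof -
  assume c: "c \<in> carrier G"
  have "inj_on (\<lambda>g. g \<otimes> c) (carrier G)" using c by (auto intro!: inj_onI)
  moreover have "(\<lambda>g. g \<otimes> c) ` carrier G = carrier G"
  proof
    show "carrier G \<subseteq> (\<lambda>g. g \<otimes> c) ` carrier G"
    proof
      fix y assume y: "y \<in> carrier G"
      then have "y = (y \<otimes> inv c) \<otimes> c" using c by (simp add: m_assoc)
      then show "y \<in> (\<lambda>g. g \<otimes> c) ` carrier G" using c y by (metis image_eqI inv_closed m_closed)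
    qed
  qed (use c in auto)
  ultimately show ?thesis by (simp add: bij_betw_def)
qed

lemma iso_trans: "sub_digraph_iso G L R A B \<Longrightarrow> sub_digraph_iso G L R B C \<Longrightarrow> sub_digraph_iso G L R A C"
proof -
  assume "sub_digraph_iso G L R A B" "sub_digraph_iso G L R B C"
  then obtain f g where f: "bij_betw f A B" "\<forall>x\<in>A. \<forall>y\<in>A. arc2S G L R x y \<longleftrightarrow> arc2S G L R (f x) (f y)"
    and g: "bij_betw g B C" "\<forall>x\<in>B. \<forall>y\<in>B. arc2S G L R x y \<longleftrightarrow> arc2S G L R (g x) (g y)"
    unfolding sub_digraph_iso_def by blast
  have "bij_betw (g \<circ> f) A C" using f g bij_betw_trans by blast
  moreover have "\<forall>x\<in>A. \<forall>y\<in>A. arc2S G L R x y \<longleftrightarrow> arc2S G L R ((g \<circ> f) x) ((g \<circ> f) y)"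
  proof (intro ballI)
    fix x y assume x: "x \<in> A" and y: "y \<in> A"
    have fx: "f x \<in> B" and fy: "f y \<in> B" using f(1) x y bij_betwE by blast+
    show "arc2S G L R x y \<longleftrightarrow> arc2S G L R ((g \<circ> f) x) ((g \<circ> f) y)"
      using f(2) g(2) x y fx fy by simp
  qed
  ultimately show ?thesis unfolding sub_digraph_iso_def by blast
qed

lemma iso_L:
  assumes l0: "l0 \<in> L" and N: "l0 \<in> normaliser G L"
  shows "sub_digraph_iso G L R (Q n1) (Q n2)"
proof -
  define n2' where "n2' = n2 + kk * n1"
  have e2: "Q n2' = Q n2" unfolding n2'_def using Q_mod[of "n2 + kk*n1"] Q_mod[of n2] by simp
  have le: "n1 \<le> n2'" unfolding n2'_def using kk(1) by (metis le_add2 mult_le_mono1 mult_1 add.commute le_trans)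
  define j where "j = n2' - n1"
  have j: "j + n1 = n2'" unfolding j_def using le by simp
  define c where "c = wprod G (replicate j l0)"
  have l0C: "l0 \<in> carrier G" using l0 LC by blast
  have cL: "c \<in> Lp G L j" unfolding c_def using Lp_rep[OF l0] .
  have cC: "c \<in> carrier G" using LpL_carrier[OF cL] .
  have P0: "(\<lambda>l. inv l0 \<otimes> l \<otimes> l0) ` L = L" using N unfolding normaliser_def by blast
  have P: "(\<lambda>l. inv c \<otimes> l \<otimes> c) ` L = L" unfolding c_def using conj_rep[OF LC l0C P0] .
  have arc: "\<And>g h. g \<in> carrier G \<Longrightarrow> h \<in> carrier G \<Longrightarrow> arc2S G L R (c \<otimes> g) (c \<otimes> h) \<longleftrightarrow> arc2S G L R g h"
    using lmult_arc[OF cC P] by blast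
  have gC: "lw n1 \<otimes> s \<in> carrier G" using lwC sC by simp
  have "sub_digraph_iso G L R (comp (lw n1 \<otimes> s)) (comp (c \<otimes> (lw n1 \<otimes> s)))"
    using F_comp(2)[OF bij_lmult[OF cC] arc gC] .
  moreover have "comp (c \<otimes> (lw n1 \<otimes> s)) = Q n2"
  proof -
    have "c \<otimes> (lw n1 \<otimes> s) = (c \<otimes> lw n1) \<otimes> s" using cC lwC sC by (simp add: m_assoc)
    then have "comp (c \<otimes> (lw n1 \<otimes> s)) = Q (j + n1)" using Q_indep[OF Lp_mult[OF LC cL lw]] by simp
    then show ?thesis using j e2 by simp
  qed
  ultimately show ?thesis unfolding Q_def by simp
qed

lemma iso_R:
  assumes r0: "r0 \<in> R" and N: "r0 \<in> normaliser G R"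
  shows "sub_digraph_iso G L R (Q n1) (Q n2)"
proof -
  define n2' where "n2' = n2 + kk * n1"
  have e2: "Q n2' = Q n2" unfolding n2'_def using Q_mod[of "n2 + kk*n1"] Q_mod[of n2] by simp
  have le: "n1 \<le> n2'" unfolding n2'_def using kk(1) by (metis le_add2 mult_le_mono1 mult_1 add.commute le_trans)
  define j where "j = n2' - n1"
  have j: "j + n1 = n2'" unfolding j_def using le by simp
  define c where "c = wprod G (replicate j r0)"
  have r0C: "r0 \<in> carrier G" using r0 RC by blast
  have cR: "c \<in> Lp G R j" unfolding c_def using Lp_rep[OF r0] .
  have cC: "c \<in> carrier G" using LpR_carrier[OF cR] .
  have P0: "(\<lambda>l. inv r0 \<otimes> l \<otimes> r0) ` R = R" using N unfolding normaliser_def by blast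
  have P: "(\<lambda>l. inv c \<otimes> l \<otimes> c) ` R = R" unfolding c_def using conj_rep[OF RC r0C P0] .
  have arc: "\<And>g h. g \<in> carrier G \<Longrightarrow> h \<in> carrier G \<Longrightarrow> arc2S G L R (g \<otimes> c) (h \<otimes> c) \<longleftrightarrow> arc2S G L R g h"
    using rmult_arc[OF cC P] by blast
  have gC: "lw n1 \<otimes> s \<in> carrier G" using lwC sC by simp
  have "sub_digraph_iso G L R (comp (lw n1 \<otimes> s)) (comp ((lw n1 \<otimes> s) \<otimes> c))"
    using F_comp(2)[OF bij_rmult[OF cC] arc gC] .
  moreover have "comp ((lw n1 \<otimes> s) \<otimes> c) = Q n2"
  proof -
    have vw: "lw j \<otimes> lw n1 \<in> Lp G L (j + n1)" using Lp_mult[OF LC lw lw] .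
    have vwC: "lw j \<otimes> lw n1 \<otimes> s \<in> carrier G" using lwC sC by simp
    have H: "Hrel (lw j) c" using Hrel_Lp[OF lw cR] .
    have "inv (lw j) \<otimes> (lw j \<otimes> lw n1 \<otimes> s) \<otimes> c = (lw n1 \<otimes> s) \<otimes> c"
      using lwC sC cC by (simp add: m_assoc)
    then have "reach (lw j \<otimes> lw n1 \<otimes> s) ((lw n1 \<otimes> s) \<otimes> c)"
      unfolding reach_def using vwC H by metis
    then have "comp ((lw n1 \<otimes> s) \<otimes> c) = comp (lw j \<otimes> lw n1 \<otimes> s)"
      using comp_eq_iff[OF vwC] reach_carrier by metis
    also have "\<dots> = Q (j + n1)" using Q_indep[OF vw] .
    finally show ?thesis using j e2 by simp
  qed
  ultimately show ?thesis unfolding Q_def by simp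
qed

end

theorem mainTheorem17:
  fixes G (structure) and L R :: "'a set" and s :: 'a
  assumes "group G"
    and "L \<subseteq> carrier G" "L \<noteq> {}" "R \<subseteq> carrier G" "R \<noteq> {}"
    and "subgroup (W G L) G" "subgroup (W G R) G"
    and "s \<in> carrier G"
  defines "D \<equiv> double_coset G L s R"
    and "k \<equiv> min_sc_length G L R s"
  shows "D = \<Union>{C \<in> SCCs G L R. C \<subseteq> D}
     \<and> (k \<noteq> \<infinity> \<longrightarrow> finite {C \<in> SCCs G L R. C \<subseteq> D}
            \<and> enat (card {C \<in> SCCs G L R. C \<subseteq> D}) = k
            \<and> (\<forall>C1\<in>{C \<in> SCCs G L R. C \<subseteq> D}. \<forall>C2\<in>{C \<in> SCCs G L R. C \<subseteq> D}. C1 \<approx> C2))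
     \<and> (k = \<infinity> \<longrightarrow> infinite {C \<in> SCCs G L R. C \<subseteq> D})
     \<and> (k \<noteq> \<infinity> \<and> (L \<inter> normaliser G L \<noteq> {} \<or> R \<inter> normaliser G R \<noteq> {}) \<longrightarrow>
          (\<forall>C1\<in>{C \<in> SCCs G L R. C \<subseteq> D}. \<forall>C2\<in>{C \<in> SCCs G L R. C \<subseteq> D}.
              sub_digraph_iso G L R C1 C2))"
proof -
  interpret T: twoSs G L R s
    by (rule twoSs.intro, rule twoS.intro) (use assms in \<open>auto simp: twoS_axioms_def twoSs_axioms_def\<close>)
  have DD: "D = T.D" unfolding D_def T.D_def ..
  have kk: "k = enat T.kk" unfolding k_def using T.k_eq .
  have iso: "\<forall>C1\<in>{C \<in> SCCs G L R. C \<subseteq> D}. \<forall>C2\<in>{C \<in> SCCs G L R. C \<subseteq> D}. sub_digraph_iso G L R C1 C2"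
    if Nm: "L \<inter> normaliser G L \<noteq> {} \<or> R \<inter> normaliser G R \<noteq> {}"
  proof (intro ballI)
    fix C1 C2 assume "C1 \<in> {C \<in> SCCs G L R. C \<subseteq> D}" "C2 \<in> {C \<in> SCCs G L R. C \<subseteq> D}"
    then obtain n1 n2 where n: "C1 = T.Q n1" "C2 = T.Q n2" using T.Comps_eq DD by auto
    show "sub_digraph_iso G L R C1 C2"
    proof (cases "L \<inter> normaliser G L \<noteq> {}")
      case True
      then obtain l0 where "l0 \<in> L" "l0 \<in> normaliser G L" by blast
      then show ?thesis using T.iso_L n by blast
    next
      case False
      then obtain r0 where "r0 \<in> R" "r0 \<in> normaliser G R" using Nm by blast
      then show ?thesis using T.iso_R n by blast
    qed
  qed
  show ?thesis
    using T.D_union T.card_Comps T.Comps_eqpoll iso DD kk by auto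
qed

end
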